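(* Let $\varphi=(\mathfrak{m}_1,\dots,\mathfrak{m}_\ell)$ be normalizer-adapted. Fix $1\le p\le\ell_0$ and $i\in I_p$. Then: (a) if $j\in I^+_p$ and $1\le k\le\ell$, then $[\phi_p(i)\phi_p(j)k]=[ijk]$; (b) if $j,k\in I^0_p$, then $[\phi_p(i)jk]=[ijk]$; (c) if $1\le q\le\ell_0$ with $[V_p,V_q]=0$, then $[q\,\phi_p(i)\,\phi_q(\phi_p(i))]=[q\,i\,\phi_q(i)]$.
   Context: $M=\mathsf{G}/\mathsf{H}$ almost-effective, $\mathsf{G},\mathsf{H}$ compact connected; $Q$ an $\mathrm{Ad}(\mathsf{G})$-invariant inner product on $\mathfrak{g}$, $\mathfrak{m}=\mathfrak{h}^{\perp_Q}$, $\mathfrak{m}_0=\{X\in\mathfrak{m}:[\mathfrak{h},X]=0\}$. $\varphi$ is an ordered $Q$-orthogonal decomposition of $\mathfrak{m}$ into irreducible $\mathrm{Ad}(\mathsf{H})$-modules with $\mathfrak{m}_0=\mathfrak{m}_1+\dots+\mathfrak{m}_{\ell_0}$, each $\mathfrak{m}_p$ ($p\le\ell_0$) one-dimensional, spanned by a $Q$-unit $V_p$. $[ijk]=\sum Q([e_\alpha,e_\beta],e_\gamma)^2$ over a $Q$-orthonormal adapted basis with $e_\alpha\in\mathfrak{m}_i,e_\beta\in\mathfrak{m}_j,e_\gamma\in\mathfrak{m}_k$ (symmetric in $i,j,k$). Normalizer-adapted: if $p\le\ell_0$ and $[\mathfrak{m}_p,\mathfrak{m}_i]\neq0$ then $[\mathfrak{m}_p,\mathfrak{m}_i]\cap\mathfrak{m}_j\ne0$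 for some $j$. For such $\varphi$ and $p\le\ell_0$: $I^0_p=\{i:\mathrm{ad}(V_p)|_{\mathfrak{m}_i}=0\}$, $I^+_p=\{1,\dots,\ell\}\setminus I^0_p$; for $i\in I^+_p$ there is a unique $j$ with $[pij]>0$, denoted $\phi_p(i)$, and $\phi_p(i)=i$ for $i\in I^0_p$; $I_p=\{i\in I^+_p: i<\phi_p(i)\}$. *)

theory Defs
  imports "HOL-Analysis.Analysis"
begin

text \<open>The Lie algebra g is modelled as a finite-dimensional real inner product space
  (type class euclidean_space); its inner product plays the role of Q.
  The Lie bracket is a function br.\<close>

definition lie_bracket :: "('a::euclidean_space \<Rightarrow> 'a \<Rightarrow> 'a) \<Rightarrow> bool" where
  "lie_bracket br \<longleftrightarrow> bilinear br \<and> (\<forall>x y. br x y = - br y x) \<and>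
     (\<forall>x y z. br x (br y z) + br y (br z x) + br z (br x y) = 0)"

text \<open>Q is ad-invariant: Q([x,y],z) + Q(y,[x,z]) = 0 (infinitesimal Ad(G)-invariance).\<close>
definition ad_invariant_inner :: "('a::euclidean_space \<Rightarrow> 'a \<Rightarrow> 'a) \<Rightarrow> bool" where
  "ad_invariant_inner br \<longleftrightarrow> (\<forall>x y z. inner (br x y) z + inner y (br x z) = 0)"

definition lie_subalgebra :: "('a::euclidean_space \<Rightarrow> 'a \<Rightarrow> 'a) \<Rightarrow> 'a set \<Rightarrow> bool" where
  "lie_subalgebra br h \<longleftrightarrow> subspace h \<and> (\<forall>x\<in>h. \<forall>y\<in>h. br x y \<in> h)"

definition lie_ideal :: "('a::euclidean_space \<Rightarrow> 'a \<Rightarrow> 'a) \<Rightarrow> 'a set \<Rightarrow> bool" where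
  "lie_ideal br I \<longleftrightarrow> subspace I \<and> (\<forall>x. \<forall>y\<in>I. br x y \<in> I)"

definition almost_effective :: "('a::euclidean_space \<Rightarrow> 'a \<Rightarrow> 'a) \<Rightarrow> 'a set \<Rightarrow> bool" where
  "almost_effective br h \<longleftrightarrow> (\<forall>I. lie_ideal br I \<and> I \<subseteq> h \<longrightarrow> I = {0})"

text \<open>Ad(H)-invariant subspaces (H connected: equivalently ad(h)-invariant).\<close>
definition ad_h_invariant :: "('a::euclidean_space \<Rightarrow> 'a \<Rightarrow> 'a) \<Rightarrow> 'a set \<Rightarrow> 'a set \<Rightarrow> bool" where
  "ad_h_invariant br h S \<longleftrightarrow> subspace S \<and> (\<forall>x\<in>h. \<forall>y\<in>S. br x y \<in> S)"

definition irreducible_module :: "('a::euclidean_space \<Rightarrow> 'a \<Rightarrow> 'a) \<Rightarrow> 'a set \<Rightarrow> 'a set \<Rightarrow> bool" where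
  "irreducible_module br h S \<longleftrightarrow> ad_h_invariant br h S \<and> S \<noteq> {0} \<and>
     (\<forall>W. ad_h_invariant br h W \<and> W \<subseteq> S \<longrightarrow> W = {0} \<or> W = S)"

definition mcomp :: "'a::euclidean_space set \<Rightarrow> 'a set" where
  "mcomp h = {x. \<forall>y\<in>h. inner x y = 0}"

definition mzero :: "('a::euclidean_space \<Rightarrow> 'a \<Rightarrow> 'a) \<Rightarrow> 'a set \<Rightarrow> 'a set" where
  "mzero br h = {X \<in> mcomp h. \<forall>Y\<in>h. br Y X = 0}"

definition is_onb :: "'a::euclidean_space set \<Rightarrow> 'a set \<Rightarrow> bool" where
  "is_onb B S \<longleftrightarrow> finite B \<and> B \<subseteq> S \<and> span B = S \<and> pairwise orthogonal B \<and> (\<forall>x\<in>B. norm x = 1)"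

definition onb :: "'a::euclidean_space set \<Rightarrow> 'a set" where
  "onb S = (SOME B. is_onb B S)"

text \<open>[ijk], computed w.r.t. a Q-orthonormal basis of each module (basis-independent).\<close>
definition triple :: "('a::euclidean_space \<Rightarrow> 'a \<Rightarrow> 'a) \<Rightarrow> (nat \<Rightarrow> 'a set) \<Rightarrow> nat \<Rightarrow> nat \<Rightarrow> nat \<Rightarrow> real" where
  "triple br ms i j k = (\<Sum>a\<in>onb (ms i). \<Sum>b\<in>onb (ms j). \<Sum>c\<in>onb (ms k). (inner (br a b) c)\<^sup>2)"

definition bracket_space :: "('a::euclidean_space \<Rightarrow> 'a \<Rightarrow> 'a) \<Rightarrow> 'a set \<Rightarrow> 'a set \<Rightarrow> 'a set" where
  "bracket_space br A B = span {br x y | x y. x \<in> A \<and> y \<in> B}"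

definition adapted_decomposition ::
  "('a::euclidean_space \<Rightarrow> 'a \<Rightarrow> 'a) \<Rightarrow> 'a set \<Rightarrow> nat \<Rightarrow> nat \<Rightarrow> (nat \<Rightarrow> 'a set) \<Rightarrow> (nat \<Rightarrow> 'a) \<Rightarrow> bool" where
  "adapted_decomposition br h l l0 ms V \<longleftrightarrow>
     l0 \<le> l \<and>
     (\<forall>i\<in>{1..l}. irreducible_module br h (ms i)) \<and>
     (\<forall>i\<in>{1..l}. \<forall>j\<in>{1..l}. i \<noteq> j \<longrightarrow> (\<forall>x\<in>ms i. \<forall>y\<in>ms j. inner x y = 0)) \<and>
     span (\<Union>i\<in>{1..l}. ms i) = mcomp h \<and>
     span (\<Union>i\<in>{1..l0}. ms i) = mzero br h \<and>
     (\<forall>p\<in>{1..l0}. norm (V p) = 1 \<and> ms p = span {V p})"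

definition normalizer_adapted ::
  "('a::euclidean_space \<Rightarrow> 'a \<Rightarrow> 'a) \<Rightarrow> nat \<Rightarrow> nat \<Rightarrow> (nat \<Rightarrow> 'a set) \<Rightarrow> bool" where
  "normalizer_adapted br l l0 ms \<longleftrightarrow>
     (\<forall>p\<in>{1..l0}. \<forall>i\<in>{1..l}. bracket_space br (ms p) (ms i) \<noteq> {0} \<longrightarrow>
        (\<exists>j\<in>{1..l}. bracket_space br (ms p) (ms i) \<inter> ms j \<noteq> {0}))"

definition Izero :: "('a::euclidean_space \<Rightarrow> 'a \<Rightarrow> 'a) \<Rightarrow> nat \<Rightarrow> (nat \<Rightarrow> 'a set) \<Rightarrow> (nat \<Rightarrow> 'a) \<Rightarrow> nat \<Rightarrow> nat set" where
  "Izero br l ms V p = {i\<in>{1..l}. \<forall>y\<in>ms i. br (V p) y = 0}"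

definition Iplus :: "('a::euclidean_space \<Rightarrow> 'a \<Rightarrow> 'a) \<Rightarrow> nat \<Rightarrow> (nat \<Rightarrow> 'a set) \<Rightarrow> (nat \<Rightarrow> 'a) \<Rightarrow> nat \<Rightarrow> nat set" where
  "Iplus br l ms V p = {1..l} - Izero br l ms V p"

definition phi :: "('a::euclidean_space \<Rightarrow> 'a \<Rightarrow> 'a) \<Rightarrow> nat \<Rightarrow> (nat \<Rightarrow> 'a set) \<Rightarrow> (nat \<Rightarrow> 'a) \<Rightarrow> nat \<Rightarrow> nat \<Rightarrow> nat" where
  "phi br l ms V p i = (if i \<in> Iplus br l ms V p
      then (THE j. j \<in> {1..l} \<and> triple br ms p i j > 0) else i)"

definition Ip :: "('a::euclidean_space \<Rightarrow> 'a \<Rightarrow> 'a) \<Rightarrow> nat \<Rightarrow> (nat \<Rightarrow> 'a set) \<Rightarrow> (nat \<Rightarrow> 'a) \<Rightarrow> nat \<Rightarrow> nat set" where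
  "Ip br l ms V p = {i \<in> Iplus br l ms V p. i < phi br l ms V p i}"

end

theory Submission
  imports Defs
begin

lemma onb_parts:
  assumes "is_onb B S"
  shows "finite B" "B \<subseteq> S" "span B = S" "pairwise orthogonal B" "\<And>x. x \<in> B \<Longrightarrow> norm x = 1"
  using assms unfolding is_onb_def by auto

lemma onb_ip:
  assumes "is_onb B S" "x0 \<in> B" "x \<in> B"
  shows "inner x x0 = (if x = x0 then 1 else 0)"
  using onb_parts[OF assms(1)] assms(2,3) by (auto simp: pairwise_def orthogonal_def dot_square_norm)

lemma onb_coef:
  assumes "is_onb B S" "x0 \<in> B"
  shows "inner (\<Sum>x\<in>B. inner x y *\<^sub>R x) x0 = inner x0 y"
proof -
  have "inner (\<Sum>x\<in>B. inner x y *\<^sub>R x) x0 = (\<Sum>x\<in>B. inner x y * inner x x0)"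
    by (simp add: inner_sum_left)
  also have "\<dots> = (\<Sum>x\<in>B. if x = x0 then inner x y else 0)"
  proof (rule sum.cong)
    fix x assume "x \<in> B" then show "inner x y * inner x x0 = (if x = x0 then inner x y else 0)"
      using onb_ip[OF assms(1) assms(2) \<open>x \<in> B\<close>] by simp
  qed simp
  also have "\<dots> = inner x0 y" using assms(2) onb_parts(1)[OF assms(1)] by simp
  finally show ?thesis .
qed

lemma onb_proj_orth:
  assumes "is_onb B S" "z \<in> S"
  shows "inner (y - (\<Sum>x\<in>B. inner x y *\<^sub>R x)) z = 0"
proof -
  have "orthogonal (y - (\<Sum>x\<in>B. inner x y *\<^sub>R x)) x0" if "x0 \<in> B" for x0
    using onb_coef[OF assms(1) that, of y] unfolding orthogonal_def
    by (simp add: inner_diff_left inner_diff_right inner_commute)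
  then have "orthogonal (y - (\<Sum>x\<in>B. inner x y *\<^sub>R x)) z"
    using orthogonal_to_span[of z B] assms onb_parts(3)[OF assms(1)] by blast
  then show ?thesis by (simp add: orthogonal_def)
qed

lemma onb_proj_in:
  assumes "is_onb B S"
  shows "(\<Sum>x\<in>B. inner x y *\<^sub>R x) \<in> S"
proof -
  have "(\<Sum>x\<in>B. inner x y *\<^sub>R x) \<in> span B"
    by (intro span_sum span_scale span_base)
  then show ?thesis using onb_parts(3)[OF assms] by simp
qed

lemma onb_expand:
  assumes "is_onb B S" "y \<in> S"
  shows "y = (\<Sum>x\<in>B. inner x y *\<^sub>R x)"
proof -
  define z where "z = y - (\<Sum>x\<in>B. inner x y *\<^sub>R x)"
  have "subspace S" using onb_parts(3)[OF assms(1)] by (metis subspace_span)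
  then have "z \<in> S" unfolding z_def using assms(2) onb_proj_in[OF assms(1)] by (simp add: subspace_diff)
  then have "inner z z = 0" using onb_proj_orth[OF assms(1)] unfolding z_def by blast
  then show ?thesis unfolding z_def by simp
qed

lemma onb_parseval:
  assumes "is_onb B S" "w \<in> S"
  shows "(\<Sum>c\<in>B. (inner w c)\<^sup>2) = inner w w"
proof -
  have "inner w w = inner w (\<Sum>c\<in>B. inner c w *\<^sub>R c)"
    using onb_expand[OF assms] by simp
  also have "\<dots> = (\<Sum>c\<in>B. (inner w c)\<^sup>2)"
    by (simp add: inner_sum_right power2_eq_square inner_commute)
  finally show ?thesis by simp
qed

lemma onb_proj_unique:
  assumes "is_onb A S" "is_onb B S"
  shows "(\<Sum>x\<in>A. inner x y *\<^sub>R x) = (\<Sum>x\<in>B. inner x y *\<^sub>R x)"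
proof -
  define d where "d = (\<Sum>x\<in>A. inner x y *\<^sub>R x) - (\<Sum>x\<in>B. inner x y *\<^sub>R x)"
  have "subspace S" using onb_parts(3)[OF assms(1)] by (metis subspace_span)
  then have dS: "d \<in> S" unfolding d_def using onb_proj_in[OF assms(1)] onb_proj_in[OF assms(2)]
    by (simp add: subspace_diff)
  have "d = (y - (\<Sum>x\<in>B. inner x y *\<^sub>R x)) - (y - (\<Sum>x\<in>A. inner x y *\<^sub>R x))"
    unfolding d_def by simp
  then have "inner d d = inner (y - (\<Sum>x\<in>B. inner x y *\<^sub>R x)) d - inner (y - (\<Sum>x\<in>A. inner x y *\<^sub>R x)) d"
    by (metis inner_diff_left)
  also have "\<dots> = 0" using onb_proj_orth[OF assms(1) dS] onb_proj_orth[OF assms(2) dS] by simp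
  finally have "d = 0" by simp
  then show ?thesis unfolding d_def by simp
qed

lemma onb_sumsq_indep:
  assumes "is_onb A S" "is_onb B S"
  shows "(\<Sum>x\<in>A. (inner w x)\<^sup>2) = (\<Sum>x\<in>B. (inner w x)\<^sup>2)"
proof -
  have eq: "(\<Sum>x\<in>C. (inner w x)\<^sup>2) = inner w (\<Sum>x\<in>C. inner x w *\<^sub>R x)" for C
    by (simp add: inner_sum_right power2_eq_square inner_commute)
  show ?thesis unfolding eq onb_proj_unique[OF assms] ..
qed

lemma isom_onb:
  assumes "is_onb B S" "linear f" "f ` S = S'"
    and iso: "\<And>x y. x \<in> S \<Longrightarrow> y \<in> S \<Longrightarrow> inner (f x) (f y) = inner x y"
  shows "is_onb (f ` B) S'" "inj_on f B"
proof -
  note P = onb_parts[OF assms(1)]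
  show inj: "inj_on f B"
  proof (rule inj_onI)
    fix x y assume xy: "x \<in> B" "y \<in> B" "f x = f y"
    have "inner x y = inner (f x) (f y)" using iso[of x y] xy(1,2) P(2) by (metis subsetD)
    also have "\<dots> = inner (f x) (f x)" using xy by simp
    also have "\<dots> = inner x x" using iso[of x x] xy(1) P(2) by (metis subsetD)
    also have "\<dots> = 1" using P(5)[OF xy(1)] by (simp add: dot_square_norm)
    finally show "x = y" using onb_ip[OF assms(1) xy(1) xy(2)] by (auto simp: inner_commute split: if_splits)
  qed
  show "is_onb (f ` B) S'"
    unfolding is_onb_def
  proof (intro conjI)
    show "finite (f ` B)" using P(1) by simp
    show "f ` B \<subseteq> S'" using P(2) assms(3) by auto
    show "span (f ` B) = S'" using linear_span_image[OF assms(2), of B] P(3) assms(3) by simp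
    show "pairwise orthogonal (f ` B)"
      unfolding pairwise_def orthogonal_def
    proof clarify
      fix x y assume xy: "x \<in> B" "y \<in> B" "f x \<noteq> f y"
      then have "x \<noteq> y" by auto
      then have "inner x y = 0" using onb_ip[OF assms(1) xy(2) xy(1)] by auto
      then show "inner (f x) (f y) = 0" using iso[of x y] xy P(2) by (metis subsetD)
    qed
    show "\<forall>x\<in>f ` B. norm x = 1"
    proof
      fix z assume "z \<in> f ` B"
      then obtain x where x: "x \<in> B" "z = f x" by auto
      have "inner z z = inner x x" using iso x P(2) by auto
      then show "norm z = 1" using P(5)[OF x(1)] by (simp add: norm_eq_sqrt_inner)
    qed
  qed
qed

lemma onb_exists:
  assumes "subspace S"
  shows "is_onb (onb S) S"
proof -
  obtain B where "B \<subseteq> S" "pairwise orthogonal B" "\<And>x. x \<in> B \<Longrightarrow> norm x = 1"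
    "independent B" "span B = S"
    using orthonormal_basis_subspace[OF assms] by metis
  then have "is_onb B S" unfolding is_onb_def using independent_imp_finite by blast
  then show ?thesis unfolding onb_def by (rule someI)
qed

lemma sym_eigen:
  fixes A :: "'a::euclidean_space \<Rightarrow> 'a"
  assumes S: "subspace S" "S \<noteq> {0}" and lin: "linear A" and inv: "\<And>x. x \<in> S \<Longrightarrow> A x \<in> S"
    and sym: "\<And>x y. inner (A x) y = inner x (A y)"
  shows "\<exists>v \<mu>. v \<in> S \<and> v \<noteq> 0 \<and> A v = \<mu> *\<^sub>R v"
proof -
  define K where "K = S \<inter> sphere 0 1"
  have cK: "compact K" unfolding K_def by (rule closed_Int_compact[OF closed_subspace[OF S(1)] compact_sphere])
  obtain x0 where x0: "x0 \<in> S" "x0 \<noteq> 0" using S(1,2) subspace_0 by blast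
  have "(1 / norm x0) *\<^sub>R x0 \<in> K" unfolding K_def using x0 S(1) by (simp add: subspace_scale)
  then have neK: "K \<noteq> {}" by blast
  have bl: "bounded_linear A" using lin by (simp add: linear_conv_bounded_linear)
  have "continuous_on K (\<lambda>x. inner (A x) x)"
    by (intro continuous_intros linear_continuous_on bl)
  then obtain v where v: "v \<in> K" and vmax: "\<And>y. y \<in> K \<Longrightarrow> inner (A y) y \<le> inner (A v) v"
    using continuous_attains_sup[OF cK neK] by blast
  define \<mu> where "\<mu> = inner (A v) v"
  have vS: "v \<in> S" and vn: "norm v = 1" using v unfolding K_def by auto
  have vv: "inner v v = 1" using vn by (simp add: dot_square_norm)
  have bound: "inner (A z) z \<le> \<mu> * inner z z" if "z \<in> S" for z
  proof (cases "z = 0")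
    case True then show ?thesis by (simp add: linear_0[OF lin])
  next
    case False
    define n where "n = norm z"
    have n: "n > 0" using False unfolding n_def by simp
    have "(1 / n) *\<^sub>R z \<in> K" unfolding K_def n_def using that False S(1) by (simp add: subspace_scale)
    then have "inner (A ((1/n) *\<^sub>R z)) ((1/n) *\<^sub>R z) \<le> \<mu>" using vmax unfolding \<mu>_def by blast
    then have "(1/n)*(1/n) * inner (A z) z \<le> \<mu>" by (simp add: linear_scale[OF lin])
    then have "inner (A z) z \<le> \<mu> * (n * n)" using n by (simp add: field_simps)
    moreover have "inner z z = n * n" unfolding n_def by (simp add: dot_square_norm power2_eq_square)
    ultimately show ?thesis by simp
  qed
  define w where "w = A v - \<mu> *\<^sub>R v"
  have wS: "w \<in> S" unfolding w_def using inv[OF vS] vS S(1) by (simp add: subspace_diff subspace_scale)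
  have vw: "inner v w = 0" unfolding w_def \<mu>_def using vv by (simp add: inner_diff_right inner_commute)
  have Avw: "inner (A v) w = inner w w"
  proof -
    have "A v = w + \<mu> *\<^sub>R v" unfolding w_def by simp
    then show ?thesis using vw by (simp add: inner_add_left)
  qed
  have Awv: "inner (A w) v = inner w w" using sym[of w v] Avw by (simp add: inner_commute)
  define K2 where "K2 = inner (A w) w - \<mu> * inner w w"
  have quad: "2 * t * inner w w + t * t * K2 \<le> 0" for t
  proof -
    have zS: "v + t *\<^sub>R w \<in> S" using vS wS S(1) by (simp add: subspace_add subspace_scale)
    have e1: "inner (A (v + t *\<^sub>R w)) (v + t *\<^sub>R w) = \<mu> + 2 * t * inner w w + t * t * inner (A w) w"
      unfolding \<mu>_def using Avw Awv
      by (simp add: linear_add[OF lin] linear_scale[OF lin] inner_add_left inner_add_right algebra_simps)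
    have e2: "inner (v + t *\<^sub>R w) (v + t *\<^sub>R w) = 1 + t * t * inner w w"
      using vv vw by (simp add: inner_add_left inner_add_right inner_commute algebra_simps)
    have "\<mu> + 2 * t * inner w w + t * t * inner (A w) w \<le> \<mu> * (1 + t * t * inner w w)"
      using bound[OF zS] unfolding e1 e2 .
    then show ?thesis unfolding K2_def by (simp add: algebra_simps)
  qed
  have "inner w w = 0"
  proof (rule ccontr)
    assume ne: "inner w w \<noteq> 0"
    then have pos: "inner w w > 0" using inner_ge_zero[of w] by linarith
    define t where "t = inner w w / (\<bar>K2\<bar> + 1)"
    have t: "t > 0" unfolding t_def using pos by simp
    have "t * K2 \<ge> - (t * \<bar>K2\<bar>)" using mult_left_mono[of "- \<bar>K2\<bar>" K2 t] t by simp
    moreover have "t * \<bar>K2\<bar> < inner w w"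
      unfolding t_def using pos by (simp add: field_simps)
    moreover have "2 * inner w w + t * K2 \<le> 0"
    proof -
      have "t * (2 * inner w w + t * K2) \<le> 0" using quad[of t] by (simp add: algebra_simps)
      then show ?thesis using t by (simp add: mult_le_0_iff)
    qed
    ultimately show False using pos by linarith
  qed
  then have "w = 0" by simp
  then have "A v = \<mu> *\<^sub>R v" unfolding w_def by simp
  moreover have "v \<noteq> 0" using vn by auto
  ultimately show ?thesis using vS by blast
qed

lemma sum3_cong:
  assumes A: "\<And>b c. (\<Sum>a\<in>A1. g a b c) = (\<Sum>a\<in>A2. g a b c)"
    and B: "\<And>a c. (\<Sum>b\<in>B1. g a b c) = (\<Sum>b\<in>B2. g a b c)"
    and C: "\<And>a b. (\<Sum>c\<in>C1. g a b c) = (\<Sum>c\<in>C2. g a b c)"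
  shows "(\<Sum>a\<in>A1. \<Sum>b\<in>B1. \<Sum>c\<in>C1. g a b c) = (\<Sum>a\<in>A2. \<Sum>b\<in>B2. \<Sum>c\<in>C2. g a b c)"
proof -
  have "(\<Sum>a\<in>A1. \<Sum>b\<in>B1. \<Sum>c\<in>C1. g a b c) = (\<Sum>a\<in>A1. \<Sum>b\<in>B1. \<Sum>c\<in>C2. g a b c)"
    by (simp add: C)
  also have "\<dots> = (\<Sum>a\<in>A1. \<Sum>c\<in>C2. \<Sum>b\<in>B1. g a b c)"
    by (rule sum.cong[OF refl sum.swap])
  also have "\<dots> = (\<Sum>a\<in>A1. \<Sum>c\<in>C2. \<Sum>b\<in>B2. g a b c)"
    by (simp add: B)
  also have "\<dots> = (\<Sum>c\<in>C2. \<Sum>a\<in>A1. \<Sum>b\<in>B2. g a b c)"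
    by (rule sum.swap)
  also have "\<dots> = (\<Sum>c\<in>C2. \<Sum>b\<in>B2. \<Sum>a\<in>A1. g a b c)"
    by (rule sum.cong[OF refl sum.swap])
  also have "\<dots> = (\<Sum>c\<in>C2. \<Sum>b\<in>B2. \<Sum>a\<in>A2. g a b c)"
    by (simp add: A)
  also have "\<dots> = (\<Sum>c\<in>C2. \<Sum>a\<in>A2. \<Sum>b\<in>B2. g a b c)"
    by (rule sum.cong[OF refl sum.swap])
  also have "\<dots> = (\<Sum>a\<in>A2. \<Sum>c\<in>C2. \<Sum>b\<in>B2. g a b c)"
    by (rule sum.swap)
  also have "\<dots> = (\<Sum>a\<in>A2. \<Sum>b\<in>B2. \<Sum>c\<in>C2. g a b c)"
    by (rule sum.cong[OF refl sum.swap])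
  finally show ?thesis .
qed

lemma subspace_pre:
  assumes "linear f" "subspace S" "subspace T"
  shows "subspace {y\<in>S. f y \<in> T}"
proof -
  have "{y\<in>S. f y \<in> T} = S \<inter> f -` T" by auto
  then show ?thesis using subspace_inter[OF assms(2) linear_subspace_vimage[OF assms(1,3)]] by simp
qed

lemma subspace_ker:
  assumes "linear f" "subspace S"
  shows "subspace {y\<in>S. f y = 0}"
proof -
  have "subspace {0::'b}" by (simp add: subspace_def)
  from subspace_pre[OF assms this] show ?thesis by simp
qed

locale Lset =
  fixes br :: "'a::euclidean_space \<Rightarrow> 'a \<Rightarrow> 'a" and h :: "'a set" and l l0 :: nat
    and ms :: "nat \<Rightarrow> 'a set" and V :: "nat \<Rightarrow> 'a"
  assumes LB: "lie_bracket br" and AI: "ad_invariant_inner br"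
    and AD: "adapted_decomposition br h l l0 ms V" and NA: "normalizer_adapted br l l0 ms"
begin

lemma bil: "bilinear br" using LB unfolding lie_bracket_def by blast
lemma linR: "linear (br x)" using bil unfolding bilinear_def by simp
lemma linL: "linear (\<lambda>x. br x y)" using bil unfolding bilinear_def by simp
lemma anti: "br x y = - br y x" using LB unfolding lie_bracket_def by blast
lemma jac: "br x (br y z) + br y (br z x) + br z (br x y) = 0" using LB unfolding lie_bracket_def by blast
lemma adinv: "inner (br x y) z = - inner y (br x z)"
proof -
  have "inner (br x y) z + inner y (br x z) = 0" using AI unfolding ad_invariant_inner_def by blast
  then show ?thesis by linarith
qed

lemma br0L: "br 0 x = 0" by (rule bilinear_lzero[OF bil])
lemma br0R: "br x 0 = 0" by (rule bilinear_rzero[OF bil])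

lemma deriv: "br v (br x y) = br (br v x) y + br x (br v y)"
proof -
  have 1: "br x (br y v) = - br x (br v y)" using anti[of y v] bilinear_rneg[OF bil] by simp
  have 2: "br y (br v x) = - br (br v x) y" by (rule anti)
  have "br v (br x y) + br x (br y v) + br y (br v x) = 0" by (rule jac)
  then have "br v (br x y) - br x (br v y) - br (br v x) y = 0" unfolding 1 2 by simp
  then show ?thesis by (simp add: diff_eq_eq)
qed

lemma inv3: "inner (br (br v x) y) z + inner (br x (br v y)) z + inner (br x y) (br v z) = 0"
proof -
  have "inner (br (br v x) y) z + inner (br x (br v y)) z = inner (br v (br x y)) z"
    unfolding deriv[of v x y] by (simp add: inner_add_left)
  also have "\<dots> = - inner (br x y) (br v z)" by (rule adinv)
  finally show ?thesis by linarith
qed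

lemma ADp: "l0 \<le> l" "\<forall>i\<in>{1..l}. irreducible_module br h (ms i)"
  "\<forall>i\<in>{1..l}. \<forall>j\<in>{1..l}. i \<noteq> j \<longrightarrow> (\<forall>x\<in>ms i. \<forall>y\<in>ms j. inner x y = 0)"
  "span (\<Union>i\<in>{1..l0}. ms i) = mzero br h"
  "\<forall>p\<in>{1..l0}. norm (V p) = 1 \<and> ms p = span {V p}"
  using AD unfolding adapted_decomposition_def by auto

lemma ms_irr: "k \<in> {1..l} \<Longrightarrow> irreducible_module br h (ms k)"
  using ADp(2) by simp
lemma ms_sub: "k \<in> {1..l} \<Longrightarrow> subspace (ms k)"
  using ms_irr unfolding irreducible_module_def ad_h_invariant_def by simp
lemma ms_inv: "k \<in> {1..l} \<Longrightarrow> Y \<in> h \<Longrightarrow> y \<in> ms k \<Longrightarrow> br Y y \<in> ms k"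
  using ms_irr unfolding irreducible_module_def ad_h_invariant_def by simp
lemma ms_ne: "k \<in> {1..l} \<Longrightarrow> ms k \<noteq> {0}"
  using ms_irr unfolding irreducible_module_def by simp
lemma ms_orth: "k \<in> {1..l} \<Longrightarrow> k' \<in> {1..l} \<Longrightarrow> k \<noteq> k' \<Longrightarrow> x \<in> ms k \<Longrightarrow> y \<in> ms k' \<Longrightarrow> inner x y = 0"
  using ADp(3) by simp
lemma ms_onb: "k \<in> {1..l} \<Longrightarrow> is_onb (onb (ms k)) (ms k)"
  by (rule onb_exists[OF ms_sub])
lemma onb_sub: "k \<in> {1..l} \<Longrightarrow> x \<in> onb (ms k) \<Longrightarrow> x \<in> ms k"
  using onb_parts(2)[OF ms_onb] by blast

lemma ms_irr_eq:
  assumes "k \<in> {1..l}" "subspace W" "\<And>Y y. Y \<in> h \<Longrightarrow> y \<in> W \<Longrightarrow> br Y y \<in> W" "W \<subseteq> ms k" "w \<in> W" "w \<noteq> 0"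
  shows "W = ms k"
proof -
  have "ad_h_invariant br h W" unfolding ad_h_invariant_def using assms(2,3) by blast
  moreover have "W \<noteq> {0}" using assms(5,6) by blast
  ultimately show ?thesis using ms_irr[OF assms(1)] assms(4) unfolding irreducible_module_def by blast
qed

lemma Vp:
  assumes "p \<in> {1..l0}"
  shows "p \<in> {1..l}" "norm (V p) = 1" "ms p = span {V p}" "is_onb {V p} (ms p)"
    "\<And>Y. Y \<in> h \<Longrightarrow> br Y (V p) = 0"
proof -
  show "p \<in> {1..l}" using assms ADp(1) by auto
  show n: "norm (V p) = 1" and e: "ms p = span {V p}" using assms ADp(5) by auto
  show "is_onb {V p} (ms p)" unfolding is_onb_def using n e by (auto intro: span_base)
  have "V p \<in> ms p" using e by (auto intro: span_base)
  then have "V p \<in> (\<Union>i\<in>{1..l0}. ms i)" using assms by blast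
  then have "V p \<in> span (\<Union>i\<in>{1..l0}. ms i)" by (rule span_base)
  then have "V p \<in> mzero br h" using ADp(4) by simp
  then show "\<And>Y. Y \<in> h \<Longrightarrow> br Y (V p) = 0" unfolding mzero_def by blast
qed

lemma commh:
  assumes "p \<in> {1..l0}" "Y \<in> h"
  shows "br (V p) (br Y x) = br Y (br (V p) x)"
  using deriv[of Y "V p" x] Vp(5)[OF assms] br0L by simp

lemma triple_bases:
  assumes "i \<in> {1..l}" "j \<in> {1..l}" "k \<in> {1..l}"
    and "is_onb A (ms i)" "is_onb B (ms j)" "is_onb C (ms k)"
  shows "triple br ms i j k = (\<Sum>a\<in>A. \<Sum>b\<in>B. \<Sum>c\<in>C. (inner (br a b) c)\<^sup>2)"
  unfolding triple_def
proof (rule sum3_cong)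
  fix b c
  have e: "(inner (br a b) c)\<^sup>2 = (inner (br b c) a)\<^sup>2" for a
  proof -
    have "inner (br a b) c = - inner (br b a) c" using anti[of a b] by simp
    also have "\<dots> = inner a (br b c)" using adinv[of b a c] by simp
    finally show ?thesis by (simp add: inner_commute)
  qed
  show "(\<Sum>a\<in>onb (ms i). (inner (br a b) c)\<^sup>2) = (\<Sum>a\<in>A. (inner (br a b) c)\<^sup>2)"
    unfolding e by (rule onb_sumsq_indep[OF ms_onb[OF assms(1)] assms(4)])
next
  fix a c
  have e: "(inner (br a b) c)\<^sup>2 = (inner (br a c) b)\<^sup>2" for b
    using adinv[of a b c] by (simp add: inner_commute)
  show "(\<Sum>b\<in>onb (ms j). (inner (br a b) c)\<^sup>2) = (\<Sum>b\<in>B. (inner (br a b) c)\<^sup>2)"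
    unfolding e by (rule onb_sumsq_indep[OF ms_onb[OF assms(2)] assms(5)])
next
  fix a b
  show "(\<Sum>c\<in>onb (ms k). (inner (br a b) c)\<^sup>2) = (\<Sum>c\<in>C. (inner (br a b) c)\<^sup>2)"
    by (rule onb_sumsq_indep[OF ms_onb[OF assms(3)] assms(6)])
qed

lemma triple_p:
  assumes "p \<in> {1..l0}" "k \<in> {1..l}" "j \<in> {1..l}"
  shows "triple br ms p k j = (\<Sum>b\<in>onb (ms k). \<Sum>c\<in>onb (ms j). (inner (br (V p) b) c)\<^sup>2)"
  using triple_bases[OF Vp(1)[OF assms(1)] assms(2,3) Vp(4)[OF assms(1)] ms_onb[OF assms(2)] ms_onb[OF assms(3)]]
  by simp

lemma Iplus_iff: "k \<in> Iplus br l ms V p \<longleftrightarrow> k \<in> {1..l} \<and> (\<exists>y\<in>ms k. br (V p) y \<noteq> 0)"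
  unfolding Iplus_def Izero_def by auto

lemma Izero_iff: "k \<in> Izero br l ms V p \<longleftrightarrow> k \<in> {1..l} \<and> (\<forall>y\<in>ms k. br (V p) y = 0)"
  unfolding Izero_def by auto

lemma bracket_img:
  assumes "p \<in> {1..l0}" "k \<in> {1..l}"
  shows "bracket_space br (ms p) (ms k) = br (V p) ` ms k"
proof
  have sub: "subspace (br (V p) ` ms k)" by (rule linear_subspace_image[OF linR ms_sub[OF assms(2)]])
  show "bracket_space br (ms p) (ms k) \<subseteq> br (V p) ` ms k"
    unfolding bracket_space_def
  proof (rule span_minimal[OF _ sub], clarify)
    fix x y assume x: "x \<in> ms p" and y: "y \<in> ms k"
    have "x \<in> range (\<lambda>c. c *\<^sub>R V p)" using x unfolding Vp(3)[OF assms(1)] span_singleton by simp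
    then obtain c where "x = c *\<^sub>R V p" by blast
    then have "br x y = br (V p) (c *\<^sub>R y)" by (simp add: bilinear_lmul[OF bil] bilinear_rmul[OF bil])
    moreover have "c *\<^sub>R y \<in> ms k" using y ms_sub[OF assms(2)] by (simp add: subspace_scale)
    ultimately show "br x y \<in> br (V p) ` ms k" by blast
  qed
  show "br (V p) ` ms k \<subseteq> bracket_space br (ms p) (ms k)"
  proof clarify
    fix y assume "y \<in> ms k"
    moreover have "V p \<in> ms p" using Vp(3)[OF assms(1)] by (auto intro: span_base)
    ultimately show "br (V p) y \<in> bracket_space br (ms p) (ms k)"
      unfolding bracket_space_def by (blast intro: span_base)
  qed
qed

lemma zero_on_onb:
  assumes "k \<in> {1..l}" "\<And>b. b \<in> onb (ms k) \<Longrightarrow> br v b = 0" "x \<in> ms k"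
  shows "br v x = 0"
proof -
  have "x \<in> span (onb (ms k))" using onb_parts(3)[OF ms_onb[OF assms(1)]] assms(3) by simp
  then show ?thesis using linear_eq_0_on_span[OF linR, of "onb (ms k)" v] assms(2) by blast
qed

lemma phi_props:
  assumes p: "p \<in> {1..l0}" and k: "k \<in> {1..l}"
  shows "phi br l ms V p k \<in> {1..l} \<and> (\<forall>x\<in>ms k. br (V p) x \<in> ms (phi br l ms V p k))"
proof (cases "k \<in> Iplus br l ms V p")
  case False
  then have "phi br l ms V p k = k" unfolding phi_def by simp
  moreover have "\<forall>x\<in>ms k. br (V p) x = 0" using False k Iplus_iff by blast
  ultimately show ?thesis using k subspace_0[OF ms_sub[OF k]] by simp
next
  case True
  let ?D = "br (V p)"
  obtain y0 where y0: "y0 \<in> ms k" "?D y0 \<noteq> 0" using True Iplus_iff by blast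
  have "bracket_space br (ms p) (ms k) \<noteq> {0}" unfolding bracket_img[OF p k] using y0 by blast
  then obtain j where j: "j \<in> {1..l}" and ne: "bracket_space br (ms p) (ms k) \<inter> ms j \<noteq> {0}"
    using NA p k unfolding normalizer_adapted_def by blast
  have "0 \<in> bracket_space br (ms p) (ms k) \<inter> ms j"
    using subspace_0[OF ms_sub[OF j]] unfolding bracket_space_def by (simp add: span_zero)
  then obtain w where "w \<in> ?D ` ms k" "w \<in> ms j" "w \<noteq> 0" using ne unfolding bracket_img[OF p k] by blast
  then obtain y1 where y1: "y1 \<in> ms k" "?D y1 \<in> ms j" "?D y1 \<noteq> 0" by blast
  define W where "W = {y \<in> ms k. ?D y \<in> ms j}"
  have "W = ms k"
  proof (rule ms_irr_eq[OF k])
    show "subspace W" unfolding W_def by (rule subspace_pre[OF linR ms_sub[OF k] ms_sub[OF j]])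
    show "\<And>Y y. Y \<in> h \<Longrightarrow> y \<in> W \<Longrightarrow> br Y y \<in> W"
      unfolding W_def using ms_inv[OF k] ms_inv[OF j] commh[OF p] by auto
    show "W \<subseteq> ms k" unfolding W_def by auto
    show "y1 \<in> W" unfolding W_def using y1 by auto
    show "y1 \<noteq> 0" using y1 br0R by auto
  qed
  then have Dk: "\<forall>x\<in>ms k. ?D x \<in> ms j" unfolding W_def by blast
  have Pj: "j \<in> {1..l} \<and> triple br ms p k j > 0"
  proof -
    have "triple br ms p k j = (\<Sum>b\<in>onb (ms k). inner (?D b) (?D b))"
      unfolding triple_p[OF p k j]
      by (rule sum.cong[OF refl], rule onb_parseval[OF ms_onb[OF j]], rule Dk[rule_format, OF onb_sub[OF k]])
    also have "\<dots> > 0"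
    proof -
      obtain b where b: "b \<in> onb (ms k)" "?D b \<noteq> 0" using zero_on_onb[OF k _ y0(1)] y0(2) by blast
      have "inner (?D b) (?D b) \<le> (\<Sum>b\<in>onb (ms k). inner (?D b) (?D b))"
        by (rule member_le_sum[OF b(1)]) (auto simp: onb_parts(1)[OF ms_onb[OF k]])
      moreover have "inner (?D b) (?D b) > 0" using b(2) by simp
      ultimately show ?thesis by linarith
    qed
    finally show ?thesis using j by simp
  qed
  have uniq: "j' = j" if "j' \<in> {1..l} \<and> triple br ms p k j' > 0" for j'
  proof (rule ccontr)
    assume "j' \<noteq> j"
    have "triple br ms p k j' = 0"
      unfolding triple_p[OF p k conjunct1[OF that]]
    proof (rule sum.neutral, rule ballI, rule sum.neutral, rule ballI)
      fix b c assume bc: "b \<in> onb (ms k)" "c \<in> onb (ms j')"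
      have j': "j' \<in> {1..l}" using that by blast
      have m1: "?D b \<in> ms j" using Dk onb_sub[OF k bc(1)] by blast
      have m2: "c \<in> ms j'" using onb_sub[OF j' bc(2)] .
      have "inner (?D b) c = 0" by (rule ms_orth[OF j j' \<open>j' \<noteq> j\<close>[symmetric] m1 m2])
      then show "(inner (?D b) c)\<^sup>2 = 0" by simp
    qed
    then show False using that by simp
  qed
  have "(THE j'. j' \<in> {1..l} \<and> triple br ms p k j' > 0) = j"
  proof (rule the_equality)
    show "j \<in> {1..l} \<and> triple br ms p k j > 0" by (rule Pj)
  next
    fix j' assume "j' \<in> {1..l} \<and> triple br ms p k j' > 0"
    then show "j' = j" by (rule uniq)
  qed
  then have "phi br l ms V p k = j" unfolding phi_def using True by simp
  then show ?thesis using j Dk by (simp only:)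
qed

lemma phi_in: "p \<in> {1..l0} \<Longrightarrow> k \<in> {1..l} \<Longrightarrow> phi br l ms V p k \<in> {1..l}"
  using phi_props by blast
lemma phi_map: "p \<in> {1..l0} \<Longrightarrow> k \<in> {1..l} \<Longrightarrow> x \<in> ms k \<Longrightarrow> br (V p) x \<in> ms (phi br l ms V p k)"
  using phi_props by blast

lemma DD_in:
  assumes p: "p \<in> {1..l0}" and k: "k \<in> {1..l}" and x: "x \<in> ms k"
  shows "br (V p) (br (V p) x) \<in> ms k"
proof (cases "k \<in> Iplus br l ms V p")
  case False
  then have "br (V p) x = 0" using k x Iplus_iff by blast
  then show ?thesis using br0R subspace_0[OF ms_sub[OF k]] by simp
next
  case True
  let ?D = "br (V p)"
  define k1 where "k1 = phi br l ms V p k"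
  define k2 where "k2 = phi br l ms V p k1"
  have k1: "k1 \<in> {1..l}" unfolding k1_def using phi_in[OF p k] .
  have k2: "k2 \<in> {1..l}" unfolding k2_def using phi_in[OF p k1] .
  have map2: "?D (?D y) \<in> ms k2" if "y \<in> ms k" for y
    unfolding k2_def by (rule phi_map[OF p k1], unfold k1_def, rule phi_map[OF p k that])
  obtain y0 where y0: "y0 \<in> ms k" "?D y0 \<noteq> 0" using True Iplus_iff by blast
  have "k2 = k"
  proof (rule ccontr)
    assume ne: "k2 \<noteq> k"
    have "inner (?D (?D y0)) y0 = 0" by (rule ms_orth[OF k2 k ne map2[OF y0(1)] y0(1)])
    moreover have "inner (?D (?D y0)) y0 = - inner (?D y0) (?D y0)"
      using adinv[of "V p" "?D y0" y0] by (simp add: inner_commute)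
    ultimately show False using y0(2) by simp
  qed
  then show ?thesis using map2[OF x] by simp
qed

lemma DD_sym: "inner (br v (br v x)) y = inner x (br v (br v y))"
  using adinv[of v "br v x" y] adinv[of v x "br v y"] by (simp add: inner_commute)

lemma schur:
  assumes p: "p \<in> {1..l0}" and k: "k \<in> {1..l}"
  obtains \<mu> where "\<And>x. x \<in> ms k \<Longrightarrow> br (V p) (br (V p) x) = \<mu> *\<^sub>R x"
proof -
  let ?A = "\<lambda>x. br (V p) (br (V p) x)"
  have lA: "linear ?A" using linear_compose[OF linR linR] by (simp add: o_def)
  obtain v \<mu> where v: "v \<in> ms k" "v \<noteq> 0" "?A v = \<mu> *\<^sub>R v"
    using sym_eigen[OF ms_sub[OF k] ms_ne[OF k] lA DD_in[OF p k] DD_sym] by blast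
  define W where "W = {x \<in> ms k. ?A x - \<mu> *\<^sub>R x = 0}"
  have lB: "linear (\<lambda>x. ?A x - \<mu> *\<^sub>R x)"
    by (rule linearI) (simp_all add: linear_add[OF lA] linear_scale[OF lA] algebra_simps)
  have "W = ms k"
  proof (rule ms_irr_eq[OF k])
    show "subspace W" unfolding W_def by (rule subspace_ker[OF lB ms_sub[OF k]])
    show "br Y y \<in> W" if "Y \<in> h" "y \<in> W" for Y y
    proof -
      have y: "y \<in> ms k" "?A y = \<mu> *\<^sub>R y" using that(2) unfolding W_def by auto
      have "?A (br Y y) = br Y (?A y)" using commh[OF p that(1)] by simp
      also have "\<dots> = \<mu> *\<^sub>R br Y y" using y(2) linear_scale[OF linR] by simp
      finally show ?thesis unfolding W_def using ms_inv[OF k that(1) y(1)] by simp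
    qed
    show "W \<subseteq> ms k" unfolding W_def by auto
    show "v \<in> W" unfolding W_def using v by simp
    show "v \<noteq> 0" by (rule v(2))
  qed
  then show ?thesis using that unfolding W_def by auto
qed

lemma mu_neg:
  assumes "k \<in> Iplus br l ms V p" "\<And>x. x \<in> ms k \<Longrightarrow> br (V p) (br (V p) x) = \<mu> *\<^sub>R x"
  shows "\<mu> < 0"
proof -
  obtain y where y: "y \<in> ms k" "br (V p) y \<noteq> 0" using assms(1) Iplus_iff by blast
  have "\<mu> * inner y y = inner (br (V p) (br (V p) y)) y" using assms(2)[OF y(1)] by simp
  also have "\<dots> = - inner (br (V p) y) (br (V p) y)"
    using adinv[of "V p" "br (V p) y" y] by (simp add: inner_commute)
  finally have "\<mu> * inner y y < 0" using y(2) by simp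
  moreover have "inner y y > 0" using y br0R by auto
  ultimately show ?thesis by (simp add: mult_less_0_iff)
qed

lemma surj:
  assumes p: "p \<in> {1..l0}" and k: "k \<in> Iplus br l ms V p"
  shows "br (V p) ` ms k = ms (phi br l ms V p k)"
proof -
  have k1: "k \<in> {1..l}" using k Iplus_iff by blast
  obtain y where y: "y \<in> ms k" "br (V p) y \<noteq> 0" using k Iplus_iff by blast
  show ?thesis
  proof (rule ms_irr_eq[OF phi_in[OF p k1]])
    show "subspace (br (V p) ` ms k)" by (rule linear_subspace_image[OF linR ms_sub[OF k1]])
    show "br Y z \<in> br (V p) ` ms k" if Y: "Y \<in> h" and z: "z \<in> br (V p) ` ms k" for Y z
    proof -
      obtain x where x: "x \<in> ms k" "z = br (V p) x" using z by blast
      have "br Y z = br (V p) (br Y x)" using commh[OF p Y] x(2) by simp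
      then show ?thesis using ms_inv[OF k1 Y x(1)] by blast
    qed
    show "br (V p) ` ms k \<subseteq> ms (phi br l ms V p k)" using phi_map[OF p k1] by blast
    show "br (V p) y \<in> br (V p) ` ms k" using y(1) by blast
    show "br (V p) y \<noteq> 0" by (rule y(2))
  qed
qed

end

context Lset begin

lemma pw_lin:
  assumes a: "br v (br v a) = \<mu>a *\<^sub>R a" and b: "br v (br v b) = \<mu>b *\<^sub>R b"
    and c: "br v (br v c) = \<mu>c *\<^sub>R c"
  shows "inner (br (br v a) (br v b)) c = ((\<mu>c - \<mu>a - \<mu>b) / 2) * inner (br a b) c"
proof -
  have i1: "inner (br (br v a) b) (br v c) + inner (br a (br v b)) (br v c) + inner (br a b) (br v (br v c)) = 0"
    by (rule inv3)
  have i2: "inner (br (br v (br v a)) b) c + inner (br (br v a) (br v b)) c + inner (br (br v a) b) (br v c) = 0"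
    by (rule inv3)
  have i3: "inner (br (br v a) (br v b)) c + inner (br a (br v (br v b))) c + inner (br a (br v b)) (br v c) = 0"
    by (rule inv3)
  have s1: "inner (br a b) (br v (br v c)) = \<mu>c * inner (br a b) c" using c by simp
  have s2: "inner (br (br v (br v a)) b) c = \<mu>a * inner (br a b) c" using a by (simp add: bilinear_lmul[OF bil])
  have s3: "inner (br a (br v (br v b))) c = \<mu>b * inner (br a b) c" using b by (simp add: bilinear_rmul[OF bil])
  have "2 * inner (br (br v a) (br v b)) c = \<mu>c * inner (br a b) c - \<mu>a * inner (br a b) c - \<mu>b * inner (br a b) c"
    using i1 i2 i3 s1 s2 s3 by linarith
  then show ?thesis by (simp add: field_simps)
qed

lemma pw_sq:
  assumes a: "br v (br v a) = \<mu>a *\<^sub>R a" and b: "br v (br v b) = \<mu>b *\<^sub>R b"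
    and c: "br v (br v c) = \<mu>c *\<^sub>R c"
  shows "(inner (br (br v a) (br v b)) c)\<^sup>2 = \<mu>a * \<mu>b * (inner (br a b) c)\<^sup>2"
proof -
  define lam where "lam = (\<mu>c - \<mu>a - \<mu>b) / 2"
  define t where "t = inner (br a b) c"
  have X: "inner (br (br v a) (br v b)) c = lam * t" unfolding lam_def t_def by (rule pw_lin[OF a b c])
  have a': "br v (br v (br v a)) = \<mu>a *\<^sub>R br v a" using a linear_scale[OF linR] by simp
  have b': "br v (br v (br v b)) = \<mu>b *\<^sub>R br v b" using b linear_scale[OF linR] by simp
  have "inner (br (br v (br v a)) (br v (br v b))) c = lam * inner (br (br v a) (br v b)) c"
    unfolding lam_def by (rule pw_lin[OF a' b' c])
  moreover have "inner (br (br v (br v a)) (br v (br v b))) c = \<mu>a * \<mu>b * t"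
    unfolding a b t_def by (simp add: bilinear_lmul[OF bil] bilinear_rmul[OF bil])
  ultimately have e: "\<mu>a * \<mu>b * t = lam * (lam * t)" using X by simp
  have "(inner (br (br v a) (br v b)) c)\<^sup>2 = (lam * (lam * t)) * t" unfolding X by (simp add: power2_eq_square)
  also have "\<dots> = \<mu>a * \<mu>b * t\<^sup>2" unfolding e[symmetric] by (simp add: power2_eq_square)
  finally show ?thesis unfolding t_def .
qed

lemma zeroT:
  assumes "br v b = 0" "br v c = 0"
  shows "inner (br (br v y) b) c = 0"
  using inv3[of v y b c] assms br0R by simp

lemma linJ: "linear (\<lambda>x. s *\<^sub>R br v x)"
  by (rule linearI) (simp_all add: linear_add[OF linR] linear_scale[OF linR] algebra_simps)

lemma Jmap:
  assumes p: "p \<in> {1..l0}" and k: "k \<in> Iplus br l ms V p"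
  obtains \<alpha> where "\<alpha> > 0" "\<And>x. x \<in> ms k \<Longrightarrow> br (V p) (br (V p) x) = (- \<alpha>) *\<^sub>R x"
    "is_onb ((\<lambda>x. (1 / sqrt \<alpha>) *\<^sub>R br (V p) x) ` onb (ms k)) (ms (phi br l ms V p k))"
    "inj_on (\<lambda>x. (1 / sqrt \<alpha>) *\<^sub>R br (V p) x) (onb (ms k))"
proof -
  let ?D = "br (V p)"
  have k1: "k \<in> {1..l}" using k Iplus_iff by blast
  obtain \<mu> where mu: "\<And>x. x \<in> ms k \<Longrightarrow> ?D (?D x) = \<mu> *\<^sub>R x" using schur[OF p k1] by blast
  have neg: "\<mu> < 0" by (rule mu_neg[OF k mu])
  define \<alpha> where "\<alpha> = - \<mu>"
  have apos: "\<alpha> > 0" unfolding \<alpha>_def using neg by simp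
  define s where "s = 1 / sqrt \<alpha>"
  have ss: "s * s = 1 / \<alpha>" unfolding s_def using apos by (simp add: real_sqrt_mult[symmetric])
  have ssq: "s * sqrt \<alpha> = 1" unfolding s_def using apos by simp
  let ?J = "\<lambda>x. s *\<^sub>R ?D x"
  have mu': "\<And>x. x \<in> ms k \<Longrightarrow> ?D (?D x) = (- \<alpha>) *\<^sub>R x" using mu unfolding \<alpha>_def by simp
  have img: "?J ` ms k = ms (phi br l ms V p k)"
  proof
    show "?J ` ms k \<subseteq> ms (phi br l ms V p k)"
      using phi_map[OF p k1] subspace_scale[OF ms_sub[OF phi_in[OF p k1]]] by blast
    show "ms (phi br l ms V p k) \<subseteq> ?J ` ms k"
    proof
      fix y assume "y \<in> ms (phi br l ms V p k)"
      then obtain x where x: "x \<in> ms k" "y = ?D x" using surj[OF p k] by blast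
      have "?J (sqrt \<alpha> *\<^sub>R x) = (s * sqrt \<alpha>) *\<^sub>R ?D x" using linear_scale[OF linR] by simp
      then have "?J (sqrt \<alpha> *\<^sub>R x) = y" using ssq x(2) by simp
      moreover have "sqrt \<alpha> *\<^sub>R x \<in> ms k" using x(1) subspace_scale[OF ms_sub[OF k1]] by blast
      ultimately show "y \<in> ?J ` ms k" by blast
    qed
  qed
  have iso: "inner (?J x) (?J y) = inner x y" if "x \<in> ms k" "y \<in> ms k" for x y
  proof -
    have "inner (?J x) (?J y) = s * s * inner (?D x) (?D y)" by simp
    also have "\<dots> = s * s * (- inner x (?D (?D y)))" using adinv[of "V p" x "?D y"] by simp
    also have "\<dots> = s * s * \<alpha> * inner x y" using mu'[OF that(2)] by simp
    also have "\<dots> = inner x y" unfolding ss using apos by simp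
    finally show ?thesis .
  qed
  have "is_onb (?J ` onb (ms k)) (ms (phi br l ms V p k))" "inj_on ?J (onb (ms k))"
    using isom_onb[OF ms_onb[OF k1] linJ img iso] by auto
  then show ?thesis using that[OF apos mu'] unfolding s_def by blast
qed

lemma tq:
  assumes q: "q \<in> {1..l0}" and k: "k \<in> {1..l}" and B: "is_onb B (ms k)"
  shows "triple br ms q k (phi br l ms V q k) = (\<Sum>x\<in>B. inner (br (V q) x) (br (V q) x))"
proof -
  have "triple br ms q k (phi br l ms V q k)
      = (\<Sum>x\<in>B. \<Sum>c\<in>onb (ms (phi br l ms V q k)). (inner (br (V q) x) c)\<^sup>2)"
    using triple_bases[OF Vp(1)[OF q] k phi_in[OF q k] Vp(4)[OF q] B ms_onb[OF phi_in[OF q k]]] by simp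
  also have "\<dots> = (\<Sum>x\<in>B. inner (br (V q) x) (br (V q) x))"
  proof (rule sum.cong[OF refl])
    fix x assume "x \<in> B"
    then have "x \<in> ms k" using onb_parts(2)[OF B] by blast
    then show "(\<Sum>c\<in>onb (ms (phi br l ms V q k)). (inner (br (V q) x) c)\<^sup>2) = inner (br (V q) x) (br (V q) x)"
      by (rule onb_parseval[OF ms_onb[OF phi_in[OF q k]] phi_map[OF q k]])
  qed
  finally show ?thesis .
qed

end

context Lset begin

lemma main:
  assumes p: "p \<in> {1..l0}" and i: "i \<in> Ip br l ms V p"
  shows "(\<forall>j\<in>Iplus br l ms V p. \<forall>k\<in>{1..l}.
            triple br ms (phi br l ms V p i) (phi br l ms V p j) k = triple br ms i j k)
       \<and> (\<forall>j\<in>Izero br l ms V p. \<forall>k\<in>Izero br l ms V p.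
            triple br ms (phi br l ms V p i) j k = triple br ms i j k)
       \<and> (\<forall>q\<in>{1..l0}. br (V p) (V q) = 0 \<longrightarrow>
            triple br ms q (phi br l ms V p i) (phi br l ms V q (phi br l ms V p i))
              = triple br ms q i (phi br l ms V q i))"
proof -
  let ?D = "br (V p)"
  let ?i' = "phi br l ms V p i"
  have iP: "i \<in> Iplus br l ms V p" using i unfolding Ip_def by blast
  have i1: "i \<in> {1..l}" using iP Iplus_iff by blast
  have i'1: "?i' \<in> {1..l}" by (rule phi_in[OF p i1])
  obtain ai where ai: "ai > 0" "\<And>x. x \<in> ms i \<Longrightarrow> ?D (?D x) = (- ai) *\<^sub>R x"
    "is_onb ((\<lambda>x. (1 / sqrt ai) *\<^sub>R ?D x) ` onb (ms i)) (ms ?i')"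
    "inj_on (\<lambda>x. (1 / sqrt ai) *\<^sub>R ?D x) (onb (ms i))"
    using Jmap[OF p iP] by blast
  define si where "si = 1 / sqrt ai"
  have sisq: "si * si = 1 / ai" unfolding si_def using ai(1) by (simp add: real_sqrt_mult[symmetric])
  have partA: "triple br ms ?i' (phi br l ms V p j) k = triple br ms i j k"
    if j: "j \<in> Iplus br l ms V p" and k: "k \<in> {1..l}" for j k
  proof -
    let ?j' = "phi br l ms V p j"
    have j1: "j \<in> {1..l}" using j Iplus_iff by blast
    have j'1: "?j' \<in> {1..l}" by (rule phi_in[OF p j1])
    obtain aj where aj: "aj > 0" "\<And>x. x \<in> ms j \<Longrightarrow> ?D (?D x) = (- aj) *\<^sub>R x"
      "is_onb ((\<lambda>x. (1 / sqrt aj) *\<^sub>R ?D x) ` onb (ms j)) (ms ?j')"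
      "inj_on (\<lambda>x. (1 / sqrt aj) *\<^sub>R ?D x) (onb (ms j))"
      using Jmap[OF p j] by blast
    define sj where "sj = 1 / sqrt aj"
    have sjsq: "sj * sj = 1 / aj" unfolding sj_def using aj(1) by (simp add: real_sqrt_mult[symmetric])
    obtain mk where mk: "\<And>x. x \<in> ms k \<Longrightarrow> ?D (?D x) = mk *\<^sub>R x" using schur[OF p k] by blast
    let ?g = "\<lambda>a b c. (inner (br a b) c)\<^sup>2"
    have "triple br ms ?i' ?j' k =
      (\<Sum>x\<in>(\<lambda>x. si *\<^sub>R ?D x) ` onb (ms i). \<Sum>y\<in>(\<lambda>x. sj *\<^sub>R ?D x) ` onb (ms j). \<Sum>c\<in>onb (ms k). ?g x y c)"
      by (rule triple_bases[OF i'1 j'1 k ai(3)[folded si_def] aj(3)[folded sj_def] ms_onb[OF k]])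
    also have "\<dots> = (\<Sum>a\<in>onb (ms i). \<Sum>y\<in>(\<lambda>x. sj *\<^sub>R ?D x) ` onb (ms j). \<Sum>c\<in>onb (ms k). ?g (si *\<^sub>R ?D a) y c)"
      by (subst sum.reindex[OF ai(4)[folded si_def]]) (simp add: o_def)
    also have "\<dots> = (\<Sum>a\<in>onb (ms i). \<Sum>b\<in>onb (ms j). \<Sum>c\<in>onb (ms k). ?g (si *\<^sub>R ?D a) (sj *\<^sub>R ?D b) c)"
      by (rule sum.cong[OF refl], subst sum.reindex[OF aj(4)[folded sj_def]]) (simp add: o_def)
    also have "\<dots> = (\<Sum>a\<in>onb (ms i). \<Sum>b\<in>onb (ms j). \<Sum>c\<in>onb (ms k). ?g a b c)"
    proof (intro sum.cong[OF refl])
      fix a b c assume a: "a \<in> onb (ms i)" and b: "b \<in> onb (ms j)" and c: "c \<in> onb (ms k)"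
      have am: "a \<in> ms i" using onb_sub[OF i1 a] .
      have bm: "b \<in> ms j" using onb_sub[OF j1 b] .
      have cm: "c \<in> ms k" using onb_sub[OF k c] .
      have "?g (si *\<^sub>R ?D a) (sj *\<^sub>R ?D b) c = (si * sj)\<^sup>2 * (inner (br (?D a) (?D b)) c)\<^sup>2"
        by (simp add: bilinear_lmul[OF bil] bilinear_rmul[OF bil] power_mult_distrib)
      also have "\<dots> = (si * sj)\<^sup>2 * ((- ai) * (- aj) * ?g a b c)"
        using pw_sq[OF ai(2)[OF am] aj(2)[OF bm] mk[OF cm]] by simp
      also have "\<dots> = ((si * si) * ai) * ((sj * sj) * aj) * ?g a b c"
        by (simp add: power2_eq_square algebra_simps)
      also have "\<dots> = ?g a b c" unfolding sisq sjsq using ai(1) aj(1) by simp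
      finally show "?g (si *\<^sub>R ?D a) (sj *\<^sub>R ?D b) c = ?g a b c" .
    qed
    also have "\<dots> = triple br ms i j k" unfolding triple_def ..
    finally show ?thesis .
  qed
  have surj_i: "?D ` ms i = ms ?i'" by (rule surj[OF p iP])
  have partB: "triple br ms ?i' j k = triple br ms i j k"
    if j: "j \<in> Izero br l ms V p" and k: "k \<in> Izero br l ms V p" for j k
  proof -
    have j0: "\<And>b. b \<in> ms j \<Longrightarrow> ?D b = 0" and j1: "j \<in> {1..l}" using j Izero_iff by blast+
    have k0: "\<And>c. c \<in> ms k \<Longrightarrow> ?D c = 0" and k1: "k \<in> {1..l}" using k Izero_iff by blast+
    have z: "inner (br x b) c = 0" if zx: "x \<in> ?D ` UNIV" and zb: "b \<in> onb (ms j)" and zc: "c \<in> onb (ms k)" for x b c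
    proof -
      obtain y where "x = ?D y" using zx by blast
      then show ?thesis using zeroT[OF j0[OF onb_sub[OF j1 zb]] k0[OF onb_sub[OF k1 zc]]] by simp
    qed
    have "triple br ms ?i' j k = 0" unfolding triple_def
    proof (intro sum.neutral ballI)
      fix x b c assume x: "x \<in> onb (ms ?i')" and b: "b \<in> onb (ms j)" and c: "c \<in> onb (ms k)"
      have "x \<in> ?D ` UNIV" using onb_sub[OF i'1 x] surj_i by blast
      then show "(inner (br x b) c)\<^sup>2 = 0" using z[OF _ b c] by simp
    qed
    moreover have "triple br ms i j k = 0" unfolding triple_def
    proof (intro sum.neutral ballI)
      fix x b c assume x: "x \<in> onb (ms i)" and b: "b \<in> onb (ms j)" and c: "c \<in> onb (ms k)"
      have xm: "x \<in> ms i" using onb_sub[OF i1 x] .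
      have "?D ((- 1 / ai) *\<^sub>R ?D x) = (- 1 / ai) *\<^sub>R ?D (?D x)" by (rule linear_scale[OF linR])
      also have "\<dots> = x" using ai(2)[OF xm] ai(1) by simp
      finally have "x \<in> ?D ` UNIV" by (metis rangeI)
      then show "(inner (br x b) c)\<^sup>2 = 0" using z[OF _ b c] by simp
    qed
    ultimately show ?thesis by simp
  qed
  have partC: "triple br ms q ?i' (phi br l ms V q ?i') = triple br ms q i (phi br l ms V q i)"
    if q: "q \<in> {1..l0}" and pq: "?D (V q) = 0" for q
  proof -
    let ?E = "br (V q)"
    have comm: "?D (?E x) = ?E (?D x)" for x
      using deriv[of "V p" "V q" x] pq br0L by simp
    have "triple br ms q ?i' (phi br l ms V q ?i') = (\<Sum>x\<in>(\<lambda>x. si *\<^sub>R ?D x) ` onb (ms i). inner (?E x) (?E x))"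
      by (rule tq[OF q i'1 ai(3)[folded si_def]])
    also have "\<dots> = (\<Sum>a\<in>onb (ms i). inner (?E (si *\<^sub>R ?D a)) (?E (si *\<^sub>R ?D a)))"
      by (subst sum.reindex[OF ai(4)[folded si_def]]) (simp add: o_def)
    also have "\<dots> = (\<Sum>a\<in>onb (ms i). inner (?E a) (?E a))"
    proof (rule sum.cong[OF refl])
      fix a assume a: "a \<in> onb (ms i)"
      have am: "a \<in> ms i" using onb_sub[OF i1 a] .
      have "inner (?E (si *\<^sub>R ?D a)) (?E (si *\<^sub>R ?D a)) = si * si * inner (?D (?E a)) (?D (?E a))"
        by (simp add: linear_scale[OF linR] comm)
      also have "\<dots> = si * si * (- inner (?E a) (?D (?D (?E a))))"
        using adinv[of "V p" "?E a" "?D (?E a)"] by simp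
      also have "?D (?D (?E a)) = ?E (?D (?D a))" by (simp add: comm)
      also have "\<dots> = (- ai) *\<^sub>R ?E a" using ai(2)[OF am] linear_scale[OF linR, of "V q" "- ai" a] by simp
      also have "si * si * (- inner (?E a) ((- ai) *\<^sub>R ?E a)) = (si * si * ai) * inner (?E a) (?E a)"
        by simp
      also have "\<dots> = inner (?E a) (?E a)" unfolding sisq using ai(1) by simp
      finally show "inner (?E (si *\<^sub>R ?D a)) (?E (si *\<^sub>R ?D a)) = inner (?E a) (?E a)" .
    qed
    also have "\<dots> = triple br ms q i (phi br l ms V q i)"
      by (rule tq[OF q i1 ms_onb[OF i1], symmetric])
    finally show ?thesis .
  qed
  show ?thesis using partA partB partC by blast
qed

end

theorem lemma5p4:
  fixes br :: "'a::euclidean_space \<Rightarrow> 'a \<Rightarrow> 'a"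
    and h :: "'a set" and l l0 :: nat and ms :: "nat \<Rightarrow> 'a set" and V :: "nat \<Rightarrow> 'a"
    and p i :: nat
  assumes "lie_bracket br" and "ad_invariant_inner br"
    and "lie_subalgebra br h" and "almost_effective br h"
    and "adapted_decomposition br h l l0 ms V"
    and "normalizer_adapted br l l0 ms"
    and "p \<in> {1..l0}" and "i \<in> Ip br l ms V p"
  shows "(\<forall>j\<in>Iplus br l ms V p. \<forall>k\<in>{1..l}.
            triple br ms (phi br l ms V p i) (phi br l ms V p j) k = triple br ms i j k)
       \<and> (\<forall>j\<in>Izero br l ms V p. \<forall>k\<in>Izero br l ms V p.
            triple br ms (phi br l ms V p i) j k = triple br ms i j k)
       \<and> (\<forall>q\<in>{1..l0}. br (V p) (V q) = 0 \<longrightarrow>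
            triple br ms q (phi br l ms V p i) (phi br l ms V q (phi br l ms V p i))
              = triple br ms q i (phi br l ms V q i))"
proof -
  interpret Lset br h l l0 ms V
    by unfold_locales (use assms in auto)
  show ?thesis by (rule main[OF assms(7,8)])
qed

end
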